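(* Let $k,n$ be integers with $2\le k\le n$. Then $d^E_3(n,k)\le \max\{d^E_3(n-1,k-1),\,d^E_3(n-2,k-2)\}$.
   Context: For $k\le n$, $d^E_3(n,k)$ denotes the largest minimum distance among all ternary Euclidean LCD $[n,k]$ codes, i.e. $k$-dimensional subspaces $C\subseteq\mathbb{F}_3^n$ with $C\cap C^{\perp_E}=\{0\}$, where $C^{\perp_E}$ is the dual with respect to $\langle x,y\rangle_E=\sum x_iy_i$. *)

theory Defs
  imports "Berlekamp_Zassenhaus.Finite_Field" "HOL-Library.Function_Algebras"
begin

typedef three = "{0::nat, 1, 2}" by auto

lemma card_three: "CARD(three) = 3"
  by (simp add: type_definition.card[OF type_definition_three])

instance three :: finite
proof
  show "finite (UNIV :: three set)"
    by (metis card_three card.infinite zero_neq_numeral)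
qed

instance three :: prime_card
  by standard (simp add: card_three)

type_synonym F3 = "three mod_ring"

lemma CARD_F3: "CARD(F3) = 3"
  by (simp add: card_three)

text \<open>Words are functions nat to F_3; F_3^n is the set of words supported on {0..<n}.
  The set of all words is a vector space over F_3 with pointwise operations.\<close>

definition scaleF3 :: "F3 \<Rightarrow> (nat \<Rightarrow> F3) \<Rightarrow> (nat \<Rightarrow> F3)" where
  "scaleF3 c v = (\<lambda>i. c * v i)"

interpretation F3vs: vector_space scaleF3
  by standard (auto simp: scaleF3_def algebra_simps fun_eq_iff)

definition F3n :: "nat \<Rightarrow> (nat \<Rightarrow> F3) set" where
  "F3n n = {v. \<forall>i\<ge>n. v i = 0}"

definition inner_E :: "nat \<Rightarrow> (nat \<Rightarrow> F3) \<Rightarrow> (nat \<Rightarrow> F3) \<Rightarrow> F3" where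
  "inner_E n x y = (\<Sum>i<n. x i * y i)"

definition dual_E :: "nat \<Rightarrow> (nat \<Rightarrow> F3) set \<Rightarrow> (nat \<Rightarrow> F3) set" where
  "dual_E n C = {y \<in> F3n n. \<forall>x\<in>C. inner_E n x y = 0}"

definition linear_code :: "nat \<Rightarrow> nat \<Rightarrow> (nat \<Rightarrow> F3) set \<Rightarrow> bool" where
  "linear_code n k C \<longleftrightarrow> C \<subseteq> F3n n \<and> F3vs.subspace C \<and> F3vs.dim C = k"

definition LCD_code :: "nat \<Rightarrow> nat \<Rightarrow> (nat \<Rightarrow> F3) set \<Rightarrow> bool" where
  "LCD_code n k C \<longleftrightarrow> linear_code n k C \<and> C \<inter> dual_E n C = {0}"

definition wt :: "nat \<Rightarrow> (nat \<Rightarrow> F3) \<Rightarrow> nat" where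
  "wt n x = card {i. i < n \<and> x i \<noteq> 0}"

text \<open>Minimum distance = minimum weight of a nonzero codeword
  (convention: 0 for the zero code, via Inf of the empty set of naturals).\<close>
definition min_dist :: "nat \<Rightarrow> (nat \<Rightarrow> F3) set \<Rightarrow> nat" where
  "min_dist n C = Inf {wt n x | x. x \<in> C \<and> x \<noteq> 0}"

definition dE3 :: "nat \<Rightarrow> nat \<Rightarrow> nat" where
  "dE3 n k = Max {min_dist n C | C. LCD_code n k C}"

end

theory Submission
  imports Defs "HOL-Combinatorics.Permutations"
begin

lemma F3_three: "(x::F3) + x + x = 0"
proof -
  have "(x::F3) + x + x = of_nat (CARD(three)) * x" by (simp add: card_three algebra_simps)
  also have "\<dots> = 0" by (simp del: of_nat_card_eq_0 add: of_nat_card_eq_0[where 'a=three])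
  finally show ?thesis .
qed

lemma F3_double: "(x::F3) + x = 0 \<Longrightarrow> x = 0"
proof -
  assume h: "x + x = 0"
  have "0 + x = 0" using F3_three[of x] unfolding h .
  then show ?thesis by simp
qed

lemma inner_sym: "inner_E n x y = inner_E n y x"
  unfolding inner_E_def by (simp add: mult.commute)

lemma inner_add: "inner_E n (x + y) z = inner_E n x z + inner_E n y z"
  unfolding inner_E_def by (simp add: sum.distrib distrib_right)

lemma inner_diff: "inner_E n (x - y) z = inner_E n x z - inner_E n y z"
  unfolding inner_E_def by (simp add: sum_subtractf left_diff_distrib)

lemma inner_scale: "inner_E n (scaleF3 a x) z = a * inner_E n x z"
  unfolding inner_E_def scaleF3_def by (simp add: sum_distrib_left mult.assoc)

lemma inner_zero[simp]: "inner_E n 0 z = 0"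
  unfolding inner_E_def by simp

lemma scale_apply[simp]: "scaleF3 a x i = a * x i"
  by (simp add: scaleF3_def)

lemma finite_F3n: "finite (F3n n)"
proof -
  have "F3n n \<subseteq> {f. \<forall>x. (x \<in> {..<n} \<longrightarrow> f x \<in> UNIV) \<and> (x \<notin> {..<n} \<longrightarrow> f x = 0)}"
    by (auto simp: F3n_def)
  moreover have "finite {f::nat\<Rightarrow>F3. \<forall>x. (x \<in> {..<n} \<longrightarrow> f x \<in> UNIV) \<and> (x \<notin> {..<n} \<longrightarrow> f x = 0)}"
    by (rule finite_set_of_finite_funs) auto
  ultimately show ?thesis by (rule finite_subset)
qed

lemma dim_insert_fin:
  assumes "finite S" "x \<notin> F3vs.span S"
  shows "F3vs.dim (insert x S) = F3vs.dim S + 1"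
proof -
  obtain B where B: "B \<subseteq> S" "F3vs.independent B" "S \<subseteq> F3vs.span B" "card B = F3vs.dim S"
    using F3vs.basis_exists by blast
  have fB: "finite B" using B(1) assms(1) finite_subset by blast
  have spB: "F3vs.span B = F3vs.span S"
    using B(1,3) by (metis F3vs.span_eq F3vs.span_superset subset_trans)
  have xB: "x \<notin> B" using assms(2) B(1) F3vs.span_superset by blast
  show ?thesis
  proof (rule F3vs.dim_unique[of "insert x B"])
    show "insert x B \<subseteq> insert x S" using B(1) by blast
    show "insert x S \<subseteq> F3vs.span (insert x B)"
      using B(3) F3vs.span_mono[of B "insert x B"] F3vs.span_superset[of "insert x B"] by blast
    show "F3vs.independent (insert x B)"
      using B(2) assms(2) spB by (intro F3vs.independent_insertI) auto
    show "card (insert x B) = F3vs.dim S + 1" using fB xB B(4) by simp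
  qed
qed

lemma dim0_fin:
  assumes "finite S" "F3vs.dim S = 0"
  shows "S \<subseteq> {0}"
proof -
  obtain B where B: "B \<subseteq> S" "F3vs.independent B" "S \<subseteq> F3vs.span B" "card B = F3vs.dim S"
    using F3vs.basis_exists by blast
  have "finite B" using B(1) assms(1) finite_subset by blast
  then have "B = {}" using B(4) assms(2) by simp
  then show ?thesis using B(3) by simp
qed

lemma subspace_coord0:
  assumes "F3vs.subspace S"
  shows "F3vs.subspace {c\<in>S. c i = 0}"
  using assms unfolding F3vs.subspace_def by auto

lemma dimdrop:
  assumes S: "F3vs.subspace S" "finite S" and w: "w \<in> S" "w i \<noteq> 0"
  shows "F3vs.dim S = F3vs.dim {c\<in>S. c i = 0} + 1"
proof -
  define D where "D = {c\<in>S. c i = 0}"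
  have sD: "F3vs.subspace D" unfolding D_def using subspace_coord0[OF S(1)] .
  have spD: "F3vs.span D = D" using sD F3vs.span_eq_iff by blast
  have "F3vs.span (insert w D) = S"
  proof (rule F3vs.span_subspace)
    show "insert w D \<subseteq> S" using w unfolding D_def by auto
    show "S \<subseteq> F3vs.span (insert w D)"
    proof
      fix y assume y: "y \<in> S"
      have "y - scaleF3 (y i / w i) w \<in> D"
        unfolding D_def using y w S(1) F3vs.subspace_diff F3vs.subspace_scale by auto
      then show "y \<in> F3vs.span (insert w D)"
        unfolding F3vs.span_breakdown_eq spD by blast
    qed
    show "F3vs.subspace S" by fact
  qed
  then have "F3vs.dim S = F3vs.dim (insert w D)" by (metis F3vs.dim_span)
  also have "\<dots> = F3vs.dim D + 1"
  proof (rule dim_insert_fin)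
    show "finite D" using S(2) unfolding D_def by simp
    have "w \<notin> D" using w by (simp add: D_def)
    then show "w \<notin> F3vs.span D" unfolding spD .
  qed
  finally show ?thesis unfolding D_def .
qed

definition unitv :: "nat \<Rightarrow> nat \<Rightarrow> F3" where
  "unitv l = (\<lambda>i. if i = l then 1 else 0)"

lemma span_units: "F3vs.span (unitv ` {..<k}) = F3n k"
proof (induction k)
  case 0
  show ?case unfolding lessThan_0 image_empty F3vs.span_empty by (auto simp: F3n_def fun_eq_iff)
next
  case (Suc k)
  have eq: "unitv ` {..<Suc k} = insert (unitv k) (unitv ` {..<k})"
    by (simp add: lessThan_Suc)
  show ?case
  proof (rule Set.set_eqI)
    fix x
    show "x \<in> F3vs.span (unitv ` {..<Suc k}) \<longleftrightarrow> x \<in> F3n (Suc k)"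
      unfolding eq F3vs.span_breakdown_eq Suc.IH
    proof
      assume "\<exists>c. x - scaleF3 c (unitv k) \<in> F3n k"
      then obtain c where "x - scaleF3 c (unitv k) \<in> F3n k" by blast
      then show "x \<in> F3n (Suc k)" by (auto simp: F3n_def unitv_def)
    next
      assume "x \<in> F3n (Suc k)"
      then have "x - scaleF3 (x k) (unitv k) \<in> F3n k"
        by (auto simp: F3n_def unitv_def)
      then show "\<exists>c. x - scaleF3 c (unitv k) \<in> F3n k" by blast
    qed
  qed
qed

lemma indep_units: "F3vs.independent (unitv ` {..<k})"
proof (induction k)
  case 0
  show ?case unfolding lessThan_0 image_empty by (rule F3vs.independent_empty)
next
  case (Suc k)
  have eq: "unitv ` {..<Suc k} = insert (unitv k) (unitv ` {..<k})"
    by (simp add: lessThan_Suc)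
  have "unitv k \<notin> F3n k" by (auto simp: F3n_def unitv_def)
  then show ?case unfolding eq
    by (intro F3vs.independent_insertI) (auto simp: span_units Suc.IH)
qed

lemma inj_unitv: "inj unitv"
  by (rule injI) (metis unitv_def one_neq_zero)

lemma dim_F3n: "F3vs.dim (F3n k) = k"
proof -
  have "F3vs.dim (F3n k) = F3vs.dim (F3vs.span (unitv ` {..<k}))" by (simp add: span_units)
  also have "\<dots> = card (unitv ` {..<k})"
    by (rule F3vs.dim_span_eq_card_independent[OF indep_units])
  also have "\<dots> = k" using inj_unitv by (simp add: card_image inj_on_subset)
  finally show ?thesis .
qed

lemma subspace_F3n: "F3vs.subspace (F3n k)"
  by (metis span_units F3vs.subspace_span)

lemma inner_unitv: "l < n \<Longrightarrow> inner_E n (unitv l) x = x l"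
proof -
  assume l: "l < n"
  have "inner_E n (unitv l) x = (\<Sum>i<n. if i = l then x i else 0)"
    unfolding inner_E_def unitv_def by (rule sum.cong) auto
  also have "\<dots> = x l" using l by (simp add: sum.delta)
  finally show ?thesis .
qed

lemma LCD_exists: "k \<le> n \<Longrightarrow> LCD_code n k (F3n k)"
  unfolding LCD_code_def linear_code_def
proof (intro conjI)
  assume kn: "k \<le> n"
  show "F3n k \<subseteq> F3n n" using kn by (auto simp: F3n_def)
  show "F3vs.subspace (F3n k)" by (rule subspace_F3n)
  show "F3vs.dim (F3n k) = k" by (rule dim_F3n)
  show "F3n k \<inter> dual_E n (F3n k) = {0}"
  proof
    show "{0} \<subseteq> F3n k \<inter> dual_E n (F3n k)"
      by (auto simp: F3n_def dual_E_def inner_E_def)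
    show "F3n k \<inter> dual_E n (F3n k) \<subseteq> {0}"
    proof
      fix x assume x: "x \<in> F3n k \<inter> dual_E n (F3n k)"
      have "x l = 0" for l
      proof (cases "l < k")
        case True
        have "unitv l \<in> F3n k" using True by (auto simp: F3n_def unitv_def)
        then have "inner_E n (unitv l) x = 0" using x by (auto simp: dual_E_def)
        then show ?thesis using True kn inner_unitv[of l n x] by simp
      next
        case False
        then show ?thesis using x by (auto simp: F3n_def)
      qed
      then show "x \<in> {0}" by auto
    qed
  qed
qed

lemma wt_le: "wt n x \<le> n"
proof -
  have "wt n x \<le> card {..<n}" unfolding wt_def by (rule card_mono) auto
  then show ?thesis by simp
qed

lemma min_dist_le:
  assumes "x0 \<in> C" "x0 \<noteq> 0"
  shows "min_dist n C \<le> n"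
proof -
  have "{wt n x | x. x \<in> C \<and> x \<noteq> 0} \<noteq> {}" using assms by auto
  then have "min_dist n C \<in> {wt n x | x. x \<in> C \<and> x \<noteq> 0}"
    unfolding min_dist_def by (rule Inf_nat_def1)
  then show ?thesis using wt_le by auto
qed

lemma nonzero_of_dim:
  assumes "F3vs.dim C \<ge> 1"
  shows "\<exists>x\<in>C. x \<noteq> 0"
proof (rule ccontr)
  assume "\<not> ?thesis"
  then have "C \<subseteq> F3vs.span {}" by (auto simp: F3vs.span_empty)
  then have "F3vs.dim C \<le> card ({}::(nat\<Rightarrow>F3) set)" by (rule F3vs.dim_le_card) simp
  then show False using assms by simp
qed

lemma min_dist_lower: "x \<in> C \<Longrightarrow> x \<noteq> 0 \<Longrightarrow> min_dist n C \<le> wt n x"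
  unfolding min_dist_def by (rule cInf_lower) auto

lemma min_dist_attained:
  assumes "x \<in> C" "x \<noteq> 0"
  obtains y where "y \<in> C" "y \<noteq> 0" "min_dist n C = wt n y"
proof -
  have "{wt n x | x. x \<in> C \<and> x \<noteq> 0} \<noteq> {}" using assms by auto
  then have "min_dist n C \<in> {wt n x | x. x \<in> C \<and> x \<noteq> 0}"
    unfolding min_dist_def by (rule Inf_nat_def1)
  then show ?thesis using that by auto
qed

lemma dE3_fin:
  assumes "k \<ge> 1" shows "finite {min_dist n C | C. LCD_code n k C}"
proof (rule finite_subset[of _ "{..n}"])
  show "{min_dist n C | C. LCD_code n k C} \<subseteq> {..n}"
  proof
    fix d assume "d \<in> {min_dist n C | C. LCD_code n k C}"
    then obtain C where C: "LCD_code n k C" "d = min_dist n C" by auto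
    then have "F3vs.dim C \<ge> 1" using assms by (simp add: LCD_code_def linear_code_def)
    then obtain x where "x \<in> C" "x \<noteq> 0" using nonzero_of_dim by blast
    then show "d \<in> {..n}" using C min_dist_le by auto
  qed
qed simp

lemma dE3_ge: "k \<ge> 1 \<Longrightarrow> LCD_code n k C \<Longrightarrow> min_dist n C \<le> dE3 n k"
  unfolding dE3_def by (rule Max_ge[OF dE3_fin]) auto

lemma inner_restrict:
  assumes "x \<in> F3n m" "m \<le> n"
  shows "inner_E m x y = inner_E n x y"
  unfolding inner_E_def
proof (rule sum.mono_neutral_cong_left)
  show "\<forall>i\<in>{..<n} - {..<m}. x i * y i = 0" using assms(1) by (auto simp: F3n_def)
qed (use assms(2) in auto)

lemma wt_restrict:
  assumes "x \<in> F3n m" "m \<le> n"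
  shows "wt m x = wt n x"
proof -
  have "{i. i < m \<and> x i \<noteq> 0} = {i. i < n \<and> x i \<noteq> 0}"
    using assms by (auto simp: F3n_def) (meson not_le)
  then show ?thesis unfolding wt_def by simp
qed

lemma shorten:
  assumes sD: "F3vs.subspace D" and DF: "D \<subseteq> F3n n"
    and ND: "\<forall>x\<in>D. (\<forall>y\<in>D. inner_E n x y = 0) \<longrightarrow> x = 0"
    and dimD: "F3vs.dim D = k'" and k1: "k' \<ge> 1" and mn: "m \<le> n"
    and sig: "p permutes {..<n}"
    and van: "\<forall>c\<in>D. \<forall>l. m \<le> l \<and> l < n \<longrightarrow> c (p l) = 0"
    and wtd: "\<forall>x\<in>D. x \<noteq> 0 \<longrightarrow> d \<le> wt n x"
  shows "d \<le> dE3 m k'"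
proof -
  define f :: "(nat \<Rightarrow> F3) \<Rightarrow> (nat \<Rightarrow> F3)" where "f = (\<lambda>c. c \<circ> p)"
  define E where "E = f ` D"
  interpret L: module_hom scaleF3 scaleF3 f
    by (rule module_hom.intro[OF F3vs.module_axioms F3vs.module_axioms module_hom_axioms.intro])
       (auto simp: f_def fun_eq_iff scaleF3_def)
  have injf: "inj f"
  proof (rule injI)
    fix a b assume "f a = f b"
    then have "a (p l) = b (p l)" for l by (metis f_def comp_apply)
    then show "a = b" using permutes_surj[OF sig] by (metis surj_def ext)
  qed
  have sE: "F3vs.subspace E" unfolding E_def by (rule L.subspace_image[OF sD])
  have dimE: "F3vs.dim E = k'"
  proof -
    obtain B where B: "B \<subseteq> D" "F3vs.independent B" "D \<subseteq> F3vs.span B" "card B = F3vs.dim D"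
      using F3vs.basis_exists by blast
    show ?thesis
    proof (rule F3vs.dim_unique[of "f ` B"])
      show "f ` B \<subseteq> E" using B(1) unfolding E_def by blast
      show "E \<subseteq> F3vs.span (f ` B)" unfolding E_def L.span_image using B(3) by blast
      show "F3vs.independent (f ` B)"
        by (rule L.independent_injective_image[OF B(2)]) (use injf in \<open>simp add: inj_on_def inj_def\<close>)
      show "card (f ` B) = k'" using B(4) dimD injf by (simp add: card_image inj_on_subset)
    qed
  qed
  have EF: "E \<subseteq> F3n m"
  proof
    fix y assume "y \<in> E"
    then obtain c where c: "c \<in> D" "y = f c" unfolding E_def by blast
    show "y \<in> F3n m" unfolding F3n_def
    proof (intro CollectI allI impI)
      fix l assume l: "m \<le> l"
      show "y l = 0"
      proof (cases "l < n")
        case True then show ?thesis using van c l by (simp add: f_def)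
      next
        case False
        then have "p l = l" using permutes_not_in[OF sig] by simp
        then show ?thesis using c DF False by (auto simp: f_def F3n_def)
      qed
    qed
  qed
  have innf: "inner_E n (f x) (f y) = inner_E n x y" for x y
    unfolding inner_E_def f_def using sum.permute[OF sig, of "\<lambda>i. x i * y i"] by (simp add: comp_def)
  have wtf: "wt n (f x) = wt n x" for x
  proof -
    have "p ` {i. i < n \<and> f x i \<noteq> 0} = {i. i < n \<and> x i \<noteq> 0}"
    proof -
      have "p ` {i. i < n \<and> f x i \<noteq> 0} = p ` {i. i < n \<and> x (p i) \<noteq> 0}" by (simp add: f_def)
      also have "\<dots> = {i. i < n \<and> x i \<noteq> 0}"
      proof safe
        fix i assume "i < n" "x (p i) \<noteq> 0"
        then show "p i < n" using permutes_in_image[OF sig] by simp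
      next
        fix j assume j: "j < n" "x j \<noteq> 0"
        obtain i where i: "p i = j" using permutes_surj[OF sig] by (metis surj_def)
        have "i < n" using j i permutes_in_image[OF sig, of i] by simp
        then show "j \<in> p ` {i. i < n \<and> x (p i) \<noteq> 0}" using i j by auto
      qed
      finally show ?thesis .
    qed
    moreover have "card (p ` {i. i < n \<and> f x i \<noteq> 0}) = card {i. i < n \<and> f x i \<noteq> 0}"
      by (rule card_image) (rule inj_on_subset[OF permutes_inj[OF sig] subset_UNIV])
    ultimately show ?thesis unfolding wt_def by simp
  qed
  have LCD: "LCD_code m k' E"
    unfolding LCD_code_def linear_code_def
  proof (intro conjI)
    show "E \<subseteq> F3n m" "F3vs.subspace E" "F3vs.dim E = k'" by fact+
    show "E \<inter> dual_E m E = {0}"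
    proof
      show "{0} \<subseteq> E \<inter> dual_E m E"
        using F3vs.subspace_0[OF sE] by (auto simp: dual_E_def F3n_def inner_E_def)
      show "E \<inter> dual_E m E \<subseteq> {0}"
      proof
        fix z assume z: "z \<in> E \<inter> dual_E m E"
        then obtain c where c: "c \<in> D" "z = f c" unfolding E_def by blast
        have "inner_E n c y = 0" if y: "y \<in> D" for y
        proof -
          have "f y \<in> E" using y unfolding E_def by blast
          then have "inner_E m (f y) z = 0" using z by (auto simp: dual_E_def)
          then have "inner_E n (f y) (f c) = 0" using inner_restrict[OF _ mn] EF \<open>f y \<in> E\<close> c by auto
          then show ?thesis using innf inner_sym by metis
        qed
        then have "c = 0" using ND c by blast
        then show "z \<in> {0}" using c by (simp add: f_def zero_fun_def comp_def)
      qed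
    qed
  qed
  obtain x0 where x0: "x0 \<in> D" "x0 \<noteq> 0" using nonzero_of_dim dimD k1 by blast
  have "f x0 \<noteq> 0"
  proof
    assume "f x0 = 0"
    moreover have "f 0 = 0" by (simp add: f_def zero_fun_def comp_def)
    ultimately show False using injf x0 by (metis injD)
  qed
  moreover have "f x0 \<in> E" using x0 unfolding E_def by blast
  ultimately obtain y where y: "y \<in> E" "y \<noteq> 0" "min_dist m E = wt m y"
    using min_dist_attained by blast
  obtain c where c: "c \<in> D" "y = f c" using y(1) unfolding E_def by blast
  have "c \<noteq> 0" using y(2) c by (auto simp: f_def zero_fun_def comp_def)
  have "min_dist m E = wt n c" using y wt_restrict[OF _ mn] EF c wtf by auto
  also have "\<dots> \<ge> d" using wtd c \<open>c \<noteq> 0\<close> by blast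
  finally have "d \<le> min_dist m E" .
  also have "\<dots> \<le> dE3 m k'" by (rule dE3_ge[OF k1 LCD])
  finally show ?thesis .
qed

definition nd :: "nat \<Rightarrow> (nat \<Rightarrow> F3) set \<Rightarrow> bool" where
  "nd n S \<longleftrightarrow> (\<forall>x\<in>S. (\<forall>y\<in>S. inner_E n x y = 0) \<longrightarrow> x = 0)"

lemma inner_add_r: "inner_E n z (x + y) = inner_E n z x + inner_E n z y"
  by (metis inner_sym inner_add)

lemma inner_diff_r: "inner_E n z (x - y) = inner_E n z x - inner_E n z y"
  by (metis inner_sym inner_diff)

lemma inner_scale_r: "inner_E n z (scaleF3 a x) = a * inner_E n z x"
  by (metis inner_sym inner_scale)

lemma LCD_nd: "LCD_code n k C \<Longrightarrow> nd n C"
  unfolding nd_def LCD_code_def linear_code_def dual_E_def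
  by (auto simp: inner_sym)

lemma rep_or_good:
  assumes sC: "F3vs.subspace C" and ndC: "nd n C"
  shows "((\<exists>w\<in>C. w i \<noteq> 0) \<and> nd n {c\<in>C. c i = 0}) \<or>
         (\<exists>u\<in>C. u i = 0 \<and> (\<forall>y\<in>C. inner_E n u y = y i))"
proof (cases "\<exists>w\<in>C. w i \<noteq> 0")
  case False
  then have "\<exists>u\<in>C. u i = 0 \<and> (\<forall>y\<in>C. inner_E n u y = y i)"
    using F3vs.subspace_0[OF sC] by (intro bexI[of _ 0]) auto
  then show ?thesis by blast
next
  case True
  then obtain w where w: "w \<in> C" "w i \<noteq> 0" by blast
  show ?thesis
  proof (cases "nd n {c\<in>C. c i = 0}")
    case True
    then show ?thesis using w by blast
  next
    case False
    then obtain x where x: "x \<in> C" "x i = 0" "x \<noteq> 0"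
      and xo: "\<forall>y\<in>{c\<in>C. c i = 0}. inner_E n x y = 0"
      unfolding nd_def by blast
    define lam where "lam = inner_E n x w / w i"
    have rep: "inner_E n x y = lam * y i" if y: "y \<in> C" for y
    proof -
      have "y - scaleF3 (y i / w i) w \<in> {c\<in>C. c i = 0}"
        using y w sC F3vs.subspace_diff F3vs.subspace_scale by auto
      then have "inner_E n x (y - scaleF3 (y i / w i) w) = 0" using xo by blast
      then have "inner_E n x y = (y i / w i) * inner_E n x w"
        by (simp add: inner_diff_r inner_scale_r)
      then show ?thesis using w(2) by (simp add: lam_def field_simps)
    qed
    have "lam \<noteq> 0"
    proof
      assume "lam = 0"
      then have "\<forall>y\<in>C. inner_E n x y = 0" using rep by simp
      then show False using ndC x unfolding nd_def by blast
    qed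
    define u where "u = scaleF3 (1 / lam) x"
    have "u \<in> C" unfolding u_def using x sC F3vs.subspace_scale by blast
    moreover have "u i = 0" using x by (simp add: u_def)
    moreover have "\<forall>y\<in>C. inner_E n u y = y i"
      using rep \<open>lam \<noteq> 0\<close> by (simp add: u_def inner_scale)
    ultimately show ?thesis by blast
  qed
qed

lemma F3n_lt: "x \<in> F3n n \<Longrightarrow> x l \<noteq> 0 \<Longrightarrow> l < n"
proof (rule ccontr)
  assume "x \<in> F3n n" "x l \<noteq> 0" "\<not> l < n"
  then show False unfolding F3n_def by simp
qed

lemma key_cases:
  assumes C: "LCD_code n k C" and k2: "k \<ge> 2"
  shows "(\<exists>i<n. (\<exists>w\<in>C. w i \<noteq> 0) \<and> nd n {c\<in>C. c i = 0}) \<or>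
         (k \<ge> 3 \<and> (\<exists>i<n. \<exists>j<n. i \<noteq> j \<and> nd n {c\<in>C. c i = 0 \<and> c j = 0}
              \<and> F3vs.dim {c\<in>C. c i = 0 \<and> c j = 0} = k - 2))"
proof (cases "\<exists>i<n. (\<exists>w\<in>C. w i \<noteq> 0) \<and> nd n {c\<in>C. c i = 0}")
  case True
  then show ?thesis by (rule disjI1)
next
  case False
  note H = False
  have sC: "F3vs.subspace C" and CF: "C \<subseteq> F3n n" and dC: "F3vs.dim C = k"
    using C by (auto simp: LCD_code_def linear_code_def)
  have ndC: "nd n C" using LCD_nd[OF C] .
  have fC: "finite C" using CF finite_F3n finite_subset by blast
  have "\<forall>l<n. \<exists>u. u \<in> C \<and> u l = 0 \<and> (\<forall>y\<in>C. inner_E n u y = y l)"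
    using rep_or_good[OF sC ndC] H by blast
  then obtain U where U: "\<And>l. l < n \<Longrightarrow> U l \<in> C \<and> U l l = 0 \<and> (\<forall>y\<in>C. inner_E n (U l) y = y l)"
    by metis
  have "F3vs.dim C \<ge> 1" using dC k2 by simp
  then obtain y where y: "y \<in> C" "y \<noteq> 0" using nonzero_of_dim by blast
  obtain l where l: "l < n" "y l \<noteq> 0"
  proof -
    have "\<exists>l. y l \<noteq> 0" using y(2) by (auto simp: fun_eq_iff)
    then obtain l where "y l \<noteq> 0" by blast
    moreover have "l < n" using calculation y(1) CF F3n_lt by blast
    ultimately show ?thesis using that by blast
  qed
  define i where "i = l"
  have i: "i < n" "U i \<noteq> 0"
  proof -
    show "i < n" using l i_def by simp
    show "U i \<noteq> 0"
    proof
      assume "U i = 0"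
      then have "inner_E n (U i) y = 0" by simp
      then show False using U[OF \<open>i < n\<close>] y l i_def by simp
    qed
  qed
  define ui where "ui = U i"
  have ui: "ui \<in> C" "ui i = 0" "\<forall>y\<in>C. inner_E n ui y = y i" using U[OF i(1)] ui_def by auto
  obtain j where j: "j < n" "ui j \<noteq> 0"
  proof -
    have "\<exists>j. ui j \<noteq> 0" using i(2) ui_def by (auto simp: fun_eq_iff)
    then obtain j where "ui j \<noteq> 0" by blast
    moreover have "j < n" using calculation ui(1) CF F3n_lt by blast
    ultimately show ?thesis using that by blast
  qed
  have ij: "i \<noteq> j" using ui(2) j(2) by auto
  define uj where "uj = U j"
  have uj: "uj \<in> C" "uj j = 0" "\<forall>y\<in>C. inner_E n uj y = y j" using U[OF j(1)] uj_def by auto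
  define s where "s = ui j"
  have s0: "s \<noteq> 0" using j s_def by simp
  have uji: "uj i = s"
  proof -
    have "uj i = inner_E n ui uj" using ui uj by simp
    also have "\<dots> = inner_E n uj ui" by (rule inner_sym)
    also have "\<dots> = s" using uj ui s_def by simp
    finally show ?thesis .
  qed
  define Dj where "Dj = {c\<in>C. c j = 0}"
  define Dij where "Dij = {c\<in>C. c i = 0 \<and> c j = 0}"
  have sDj: "F3vs.subspace Dj" unfolding Dj_def by (rule subspace_coord0[OF sC])
  have Dij_eq: "Dij = {c\<in>Dj. c i = 0}" unfolding Dij_def Dj_def by auto
  have dim1: "F3vs.dim C = F3vs.dim Dj + 1"
    unfolding Dj_def by (rule dimdrop[OF sC fC ui(1) j(2)])
  have dim2: "F3vs.dim Dj = F3vs.dim Dij + 1"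
    unfolding Dij_eq
  proof (rule dimdrop[OF sDj])
    show "finite Dj" using fC unfolding Dj_def by simp
    show "uj \<in> Dj" using uj unfolding Dj_def by simp
    show "uj i \<noteq> 0" using uji s0 by simp
  qed
  have dimD: "F3vs.dim Dij = k - 2" using dim1 dim2 dC by simp
  have decomp: "y - scaleF3 (y j / s) ui - scaleF3 (y i / s) uj \<in> Dij" if y: "y \<in> C" for y
  proof -
    have a: "scaleF3 (y j / s) ui \<in> C" using F3vs.subspace_scale[OF sC ui(1)] .
    have b: "scaleF3 (y i / s) uj \<in> C" using F3vs.subspace_scale[OF sC uj(1)] .
    have "y - scaleF3 (y j / s) ui - scaleF3 (y i / s) uj \<in> C"
      by (rule F3vs.subspace_diff[OF sC F3vs.subspace_diff[OF sC y a] b])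
    moreover have "(y - scaleF3 (y j / s) ui - scaleF3 (y i / s) uj) i = 0"
      using ui(2) uji s0 by simp
    moreover have "(y - scaleF3 (y j / s) ui - scaleF3 (y i / s) uj) j = 0"
      using uj(2) s_def s0 by simp
    ultimately show ?thesis unfolding Dij_def by blast
  qed
  have ndD: "nd n Dij"
    unfolding nd_def
  proof (intro ballI impI)
    fix x assume x: "x \<in> Dij" and xo: "\<forall>y\<in>Dij. inner_E n x y = 0"
    have "inner_E n x y = 0" if y: "y \<in> C" for y
    proof -
      have xi: "inner_E n x ui = 0" using ui x by (simp add: inner_sym[of n x] Dij_def)
      have xj: "inner_E n x uj = 0" using uj x by (simp add: inner_sym[of n x] Dij_def)
      have "inner_E n x (y - scaleF3 (y j / s) ui - scaleF3 (y i / s) uj) = 0"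
        using xo decomp[OF y] by blast
      then show ?thesis using xi xj by (simp add: inner_diff_r inner_scale_r)
    qed
    then show "x = 0" using ndC x unfolding nd_def Dij_def by blast
  qed
  have k3: "k \<ge> 3"
  proof (rule ccontr)
    assume "\<not> k \<ge> 3"
    then have "F3vs.dim Dij = 0" using dimD k2 by simp
    moreover have "finite Dij" using fC unfolding Dij_def by simp
    ultimately have D0: "Dij \<subseteq> {0}" using dim0_fin by blast
    have prod0: "ui l * uj l = 0" if l: "l < n" for l
    proof -
      obtain Ul where Ul: "Ul \<in> C" "Ul l = 0" "\<forall>y\<in>C. inner_E n Ul y = y l" using U[OF l] by blast
      define a where "a = Ul j / s"
      define b where "b = Ul i / s"
      have "Ul - scaleF3 a ui - scaleF3 b uj = 0" using decomp[OF Ul(1)] D0 a_def b_def by blast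
      then have Ul_eq: "Ul = scaleF3 a ui + scaleF3 b uj"
        by (metis add.commute diff_add_cancel diff_diff_eq diff_zero)
      have uii: "inner_E n ui ui = 0" using ui by simp
      have ujj: "inner_E n uj uj = 0" using uj by simp
      have uij: "inner_E n ui uj = s" using ui uj uji by simp
      have uji': "inner_E n uj ui = s" using ui uj s_def by simp
      have "inner_E n Ul Ul = 0" using Ul by simp
      moreover have "inner_E n Ul Ul = a * (a * 0 + b * s) + b * (a * s + b * 0)"
        unfolding Ul_eq by (simp only: inner_add inner_add_r inner_scale inner_scale_r uii ujj uij uji')
      ultimately have "a * b * s + a * b * s = 0"
        by (simp add: mult.commute mult.left_commute)
      then have "a * b * s = 0" by (rule F3_double)
      then have "Ul j * Ul i = 0" using s0 by (simp add: a_def b_def)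
      moreover have "Ul i = ui l"
      proof -
        have "Ul i = inner_E n ui Ul" using ui(3) Ul(1) by simp
        also have "\<dots> = inner_E n Ul ui" by (rule inner_sym)
        also have "\<dots> = ui l" using Ul(3) ui(1) by simp
        finally show ?thesis .
      qed
      moreover have "Ul j = uj l"
      proof -
        have "Ul j = inner_E n uj Ul" using uj(3) Ul(1) by simp
        also have "\<dots> = inner_E n Ul uj" by (rule inner_sym)
        also have "\<dots> = uj l" using Ul(3) uj(1) by simp
        finally show ?thesis .
      qed
      ultimately show ?thesis by (simp add: mult.commute)
    qed
    have "inner_E n ui uj = 0" unfolding inner_E_def
      by (rule sum.neutral) (use prod0 in auto)
    then show False using ui uj uji s0 by simp
  qed
  have ex: "\<exists>i<n. \<exists>j<n. i \<noteq> j \<and> nd n {c\<in>C. c i = 0 \<and> c j = 0}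
              \<and> F3vs.dim {c\<in>C. c i = 0 \<and> c j = 0} = k - 2"
    apply (rule exI[of _ i], rule conjI[OF i(1)], rule exI[of _ j], rule conjI[OF j(1)])
    using ij ndD dimD unfolding Dij_def by simp
  show ?thesis by (intro disjI2 conjI k3 ex)
qed

lemma nd_sub: "nd n S \<Longrightarrow> \<forall>x\<in>S. (\<forall>y\<in>S. inner_E n x y = 0) \<longrightarrow> x = 0"
  unfolding nd_def by blast

theorem corollary5p4:
  fixes n k :: nat
  assumes "2 \<le> k" and "k \<le> n"
  shows "dE3 n k \<le> max (dE3 (n - 1) (k - 1)) (dE3 (n - 2) (k - 2))"
proof -
  have k1: "k \<ge> 1" using assms by simp
  have ne: "{min_dist n C | C. LCD_code n k C} \<noteq> {}" using LCD_exists[OF assms(2)] by blast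
  have bound: "min_dist n C \<le> max (dE3 (n - 1) (k - 1)) (dE3 (n - 2) (k - 2))"
    if C: "LCD_code n k C" for C
  proof -
    have sC: "F3vs.subspace C" and CF: "C \<subseteq> F3n n" and dC: "F3vs.dim C = k"
      using C by (auto simp: LCD_code_def linear_code_def)
    have fC: "finite C" using CF finite_F3n finite_subset by blast
    define d where "d = min_dist n C"
    have wtd: "\<forall>x\<in>C. x \<noteq> 0 \<longrightarrow> d \<le> wt n x" using min_dist_lower d_def by blast
    from key_cases[OF C assms(1)] show ?thesis
    proof
      assume "\<exists>i<n. (\<exists>w\<in>C. w i \<noteq> 0) \<and> nd n {c\<in>C. c i = 0}"
      then obtain i w where i: "i < n" "w \<in> C" "w i \<noteq> 0" "nd n {c\<in>C. c i = 0}" by blast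
      define D where "D = {c\<in>C. c i = 0}"
      have "d \<le> dE3 (n - 1) (k - 1)"
      proof (rule shorten[where D = D and n = n and p = "Transposition.transpose i (n - 1)"])
        show "F3vs.subspace D" unfolding D_def by (rule subspace_coord0[OF sC])
        show "D \<subseteq> F3n n" using CF unfolding D_def by blast
        show "\<forall>x\<in>D. (\<forall>y\<in>D. inner_E n x y = 0) \<longrightarrow> x = 0" using nd_sub i(4) unfolding D_def by blast
        show "F3vs.dim D = k - 1" using dimdrop[OF sC fC i(2) i(3)] dC unfolding D_def by simp
        show "k - 1 \<ge> 1" using assms by simp
        show "n - 1 \<le> n" by simp
        show "Transposition.transpose i (n - 1) permutes {..<n}"
          by (rule permutes_swap_id) (use i(1) assms in auto)
        show "\<forall>c\<in>D. \<forall>l. n - 1 \<le> l \<and> l < n \<longrightarrow> c (Transposition.transpose i (n - 1) l) = 0"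
        proof (intro ballI allI impI)
          fix c l assume c: "c \<in> D" and l: "n - 1 \<le> l \<and> l < n"
          have "l = n - 1" using l by arith
          then have "Transposition.transpose i (n - 1) l = i" by simp
          then show "c (Transposition.transpose i (n - 1) l) = 0" using c unfolding D_def by simp
        qed
        show "\<forall>x\<in>D. x \<noteq> 0 \<longrightarrow> d \<le> wt n x" using wtd unfolding D_def by blast
      qed
      then show ?thesis unfolding d_def by simp
    next
      assume "k \<ge> 3 \<and> (\<exists>i<n. \<exists>j<n. i \<noteq> j \<and> nd n {c\<in>C. c i = 0 \<and> c j = 0}
              \<and> F3vs.dim {c\<in>C. c i = 0 \<and> c j = 0} = k - 2)"
      then obtain i j where k3: "k \<ge> 3" and ij: "i < n" "j < n" "i \<noteq> j"
        and ndD: "nd n {c\<in>C. c i = 0 \<and> c j = 0}" and dD: "F3vs.dim {c\<in>C. c i = 0 \<and> c j = 0} = k - 2"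
        by blast
      define D where "D = {c\<in>C. c i = 0 \<and> c j = 0}"
      define t1 where "t1 = Transposition.transpose j (n - 1)"
      define t2 where "t2 = Transposition.transpose (t1 i) (n - 2)"
      have t1i: "t1 i < n" using ij assms unfolding t1_def by (auto simp: Transposition.transpose_def)
      have t1ne: "t1 i \<noteq> n - 1" using ij assms unfolding t1_def by (auto simp: Transposition.transpose_def)
      have n3: "n \<ge> 3" using k3 assms by simp
      have "d \<le> dE3 (n - 2) (k - 2)"
      proof (rule shorten[where D = D and n = n and p = "t1 \<circ> t2"])
        have "D = {c\<in>{c\<in>C. c j = 0}. c i = 0}" unfolding D_def by auto
        then show "F3vs.subspace D" using subspace_coord0[OF subspace_coord0[OF sC, of j], of i] by simp
        show "D \<subseteq> F3n n" using CF unfolding D_def by blast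
        show "\<forall>x\<in>D. (\<forall>y\<in>D. inner_E n x y = 0) \<longrightarrow> x = 0" using nd_sub ndD unfolding D_def by blast
        show "F3vs.dim D = k - 2" using dD unfolding D_def by simp
        show "k - 2 \<ge> 1" using k3 by simp
        show "n - 2 \<le> n" by simp
        show "t1 \<circ> t2 permutes {..<n}"
        proof (rule permutes_compose)
          show "t2 permutes {..<n}" unfolding t2_def by (rule permutes_swap_id) (use t1i n3 in auto)
          show "t1 permutes {..<n}" unfolding t1_def by (rule permutes_swap_id) (use ij n3 in auto)
        qed
        show "\<forall>c\<in>D. \<forall>l. n - 2 \<le> l \<and> l < n \<longrightarrow> c ((t1 \<circ> t2) l) = 0"
        proof (intro ballI allI impI)
          fix c l assume c: "c \<in> D" and l: "n - 2 \<le> l \<and> l < n"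
          have "l = n - 2 \<or> l = n - 1" using l by arith
          then have "(t1 \<circ> t2) l = i \<or> (t1 \<circ> t2) l = j"
          proof
            assume "l = n - 2"
            then have "t2 l = t1 i" unfolding t2_def by simp
            moreover have "t1 (t1 i) = i" unfolding t1_def by simp
            ultimately show ?thesis by simp
          next
            assume "l = n - 1"
            then have "t2 l = n - 1" unfolding t2_def using t1ne n3 by (auto simp: Transposition.transpose_def)
            moreover have "t1 (n - 1) = j" unfolding t1_def by simp
            ultimately show ?thesis by simp
          qed
          then show "c ((t1 \<circ> t2) l) = 0" using c unfolding D_def by auto
        qed
        show "\<forall>x\<in>D. x \<noteq> 0 \<longrightarrow> d \<le> wt n x" using wtd unfolding D_def by blast
      qed
      then show ?thesis unfolding d_def by simp
    qed
  qed
  have "Max {min_dist n C | C. LCD_code n k C} \<le> max (dE3 (n - 1) (k - 1)) (dE3 (n - 2) (k - 2))"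
    using bound by (subst Max_le_iff[OF dE3_fin[OF k1] ne]) blast
  then show ?thesis by (simp only: dE3_def[of n k])
qed

end
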